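(* Let $X\colon\mathcal H\leftarrow\mathcal G$ be a groupoid correspondence, let $V_1,V_2\subseteq X$, $W\subseteq\mathcal G$, $Z\subseteq\mathcal H$ be slices, and let $\xi\in C_c(V_1)$, $\eta\in C_c(V_2)$, $\gamma\in C_c(W)$, $\zeta\in C_c(Z)$ (extended by zero). Then $V_1W=\{xg:x\in V_1,g\in W,s(x)=r(g)\}\subseteq X$, $\langle V_1|V_2\rangle=\{\langle x_1|x_2\rangle:x_1\in V_1,x_2\in V_2,p(x_1)=p(x_2)\}\subseteq\mathcal G$ and $ZV_1=\{hx:h\in Z,x\in V_1,s(h)=r(x)\}\subseteq X$ are slices. For $y\in V_1W$ there are unique $x\in V_1$, $g\in W$ with $xg=y$, and $\xi*\gamma\in C_c(V_1W)$ with $(\xi*\gamma)(y)=\xi(x)\gamma(g)$. For $g\in\langle V_1|V_2\rangle$ there are unique $x_1\in V_1$, $x_2\in V_2$ with $g=\langle x_1|x_2\rangle$, and $\langle\xi|\eta\rangle\in C_c(\langle V_1|V_2\rangle)$ with $\langle\xi|\eta\rangle(g)=\overline{\xi(x_1)}\eta(x_2)$. For $y\in ZV_1$ there are unique $h\in Z$, $x\in V_1$ with $y=hx$, and $\zeta*\xi\in C_c(ZV_1)$ with $(\zeta*\xi)(y)=\zeta(h)\xi(x)$.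
   Context: Groupoids are étale ($r,s$ local homeomorphisms, continuous multiplication and inversion) with Hausdorff locally compact object space. A groupoid correspondence $X\colon\mathcal H\leftarrow\mathcal G$: space with commuting continuous left $\mathcal H$-action (anchor $r$) and right $\mathcal G$-action (anchor $s$), $s$ a local homeomorphism, right action free and proper. $p\colon X\to X/\mathcal G$ is the orbit projection; for $p(x_1)=p(x_2)$, $\langle x_1|x_2\rangle$ is the unique $g\in\mathcal G$ with $s(x_1)=r(g)$, $x_2=x_1g$. A slice of $\mathcal G$ is an open $V\subseteq\mathcal G$ on which $s$ and $r$ are injective; a slice of $X$ is an open $V\subseteq X$ on which $s$ and $p$ are injective. The operations are $\xi*\gamma(x)=\sum_{g\in\mathcal G^{s(x)}}\xi(xg)\gamma(g^{-1})$, $\langle\xi|\eta\rangle(g)=\sum_{x:\,s(x)=r(g)}\overline{\xi(x)}\eta(xg)$, $\zeta*\xi(x)=\sum_{h\in\mathcal H^{r(x)}}\zeta(h)\xi(h^{-1}x)$, where $\mathcal G^{y}=r^{-1}(y)$. *)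

theory Defs
  imports "HOL-Analysis.Analysis"
begin

text \<open>A groupoid with arrow space 'g and object space 'u. Composition convention:
  mult G g h (written gh) is defined iff src G g = rng G h.\<close>

record ('g, 'u) groupoid =
  rng  :: "'g \<Rightarrow> 'u"
  src  :: "'g \<Rightarrow> 'u"
  mult :: "'g \<Rightarrow> 'g \<Rightarrow> 'g"
  ginv :: "'g \<Rightarrow> 'g"
  uni  :: "'u \<Rightarrow> 'g"

definition local_homeo :: "('a::topological_space \<Rightarrow> 'b::topological_space) \<Rightarrow> bool" where
  "local_homeo f \<longleftrightarrow>
     (\<forall>x. \<exists>U. open U \<and> x \<in> U \<and> open (f ` U) \<and> homeomorphism U (f ` U) f (inv_into U f))"

definition etale_groupoid :: "('g::topological_space, 'u::t2_space) groupoid \<Rightarrow> bool" where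
  "etale_groupoid G \<longleftrightarrow>
     (\<forall>g h. src G g = rng G h \<longrightarrow>
        rng G (mult G g h) = rng G g \<and> src G (mult G g h) = src G h) \<and>
     (\<forall>f g h. src G f = rng G g \<and> src G g = rng G h \<longrightarrow>
        mult G (mult G f g) h = mult G f (mult G g h)) \<and>
     (\<forall>u. rng G (uni G u) = u \<and> src G (uni G u) = u) \<and>
     (\<forall>g. mult G (uni G (rng G g)) g = g \<and> mult G g (uni G (src G g)) = g) \<and>
     (\<forall>g. rng G (ginv G g) = src G g \<and> src G (ginv G g) = rng G g \<and>
          mult G g (ginv G g) = uni G (rng G g) \<and> mult G (ginv G g) g = uni G (src G g)) \<and>
     locally_compact_space (euclidean :: 'u topology) \<and>
     local_homeo (rng G) \<and> local_homeo (src G) \<and>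
     continuous_on {(g, h). src G g = rng G h} (\<lambda>(g, h). mult G g h) \<and>
     continuous_on UNIV (ginv G) \<and>
     continuous_on UNIV (uni G)"

record ('x, 'h, 'b, 'g, 'a) corresp =
  anc_r :: "'x \<Rightarrow> 'b"
  anc_s :: "'x \<Rightarrow> 'a"
  lact  :: "'h \<Rightarrow> 'x \<Rightarrow> 'x"
  ract  :: "'x \<Rightarrow> 'g \<Rightarrow> 'x"

definition groupoid_corresp ::
  "('h::topological_space, 'b::t2_space) groupoid \<Rightarrow> ('g::topological_space, 'a::t2_space) groupoid
   \<Rightarrow> ('x::topological_space, 'h, 'b, 'g, 'a) corresp \<Rightarrow> bool" where
  "groupoid_corresp H G X \<longleftrightarrow>
     etale_groupoid H \<and> etale_groupoid G \<and>
     \<comment> \<open>left H-action with anchor anc_r\<close>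
     (\<forall>h x. src H h = anc_r X x \<longrightarrow>
        anc_r X (lact X h x) = rng H h \<and> anc_s X (lact X h x) = anc_s X x) \<and>
     (\<forall>h1 h2 x. src H h1 = rng H h2 \<and> src H h2 = anc_r X x \<longrightarrow>
        lact X h1 (lact X h2 x) = lact X (mult H h1 h2) x) \<and>
     (\<forall>x. lact X (uni H (anc_r X x)) x = x) \<and>
     \<comment> \<open>right G-action with anchor anc_s\<close>
     (\<forall>x g. anc_s X x = rng G g \<longrightarrow>
        anc_s X (ract X x g) = src G g \<and> anc_r X (ract X x g) = anc_r X x) \<and>
     (\<forall>x g1 g2. anc_s X x = rng G g1 \<and> src G g1 = rng G g2 \<longrightarrow>
        ract X (ract X x g1) g2 = ract X x (mult G g1 g2)) \<and>
     (\<forall>x. ract X x (uni G (anc_s X x)) = x) \<and>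
     \<comment> \<open>the actions commute\<close>
     (\<forall>h x g. src H h = anc_r X x \<and> anc_s X x = rng G g \<longrightarrow>
        ract X (lact X h x) g = lact X h (ract X x g)) \<and>
     \<comment> \<open>continuity\<close>
     continuous_on UNIV (anc_r X) \<and> continuous_on UNIV (anc_s X) \<and>
     continuous_on {(h, x). src H h = anc_r X x} (\<lambda>(h, x). lact X h x) \<and>
     continuous_on {(x, g). anc_s X x = rng G g} (\<lambda>(x, g). ract X x g) \<and>
     \<comment> \<open>s is a local homeomorphism\<close>
     local_homeo (anc_s X) \<and>
     \<comment> \<open>the right action is free\<close>
     (\<forall>x g. anc_s X x = rng G g \<and> ract X x g = x \<longrightarrow> g = uni G (anc_s X x)) \<and>
     \<comment> \<open>the right action is proper: (x,g) |-> (xg, x) is a proper map (Bourbaki)\<close>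
     proper_map (subtopology euclidean {(x, g). anc_s X x = rng G g}) euclidean
        (\<lambda>(x, g). (ract X x g, x))"

text \<open>p(x1) = p(x2) for the orbit projection p : X -> X/G.\<close>
definition same_orbit :: "('g, 'u) groupoid \<Rightarrow> ('x, 'h, 'b, 'g, 'u) corresp \<Rightarrow> 'x \<Rightarrow> 'x \<Rightarrow> bool" where
  "same_orbit G X x1 x2 \<longleftrightarrow> (\<exists>g. anc_s X x1 = rng G g \<and> x2 = ract X x1 g)"

definition bra :: "('g, 'u) groupoid \<Rightarrow> ('x, 'h, 'b, 'g, 'u) corresp \<Rightarrow> 'x \<Rightarrow> 'x \<Rightarrow> 'g" where
  "bra G X x1 x2 = (THE g. anc_s X x1 = rng G g \<and> x2 = ract X x1 g)"

definition gslice :: "('g::topological_space, 'u) groupoid \<Rightarrow> 'g set \<Rightarrow> bool" where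
  "gslice G W \<longleftrightarrow> open W \<and> inj_on (src G) W \<and> inj_on (rng G) W"

definition xslice :: "('g, 'u) groupoid \<Rightarrow> ('x::topological_space, 'h, 'b, 'g, 'u) corresp \<Rightarrow> 'x set \<Rightarrow> bool" where
  "xslice G X V \<longleftrightarrow> open V \<and> inj_on (anc_s X) V \<and>
     (\<forall>x1\<in>V. \<forall>x2\<in>V. same_orbit G X x1 x2 \<longrightarrow> x1 = x2)"

text \<open>C_c(V), functions extended by zero outside V.\<close>
definition cc_on :: "'a::topological_space set \<Rightarrow> ('a \<Rightarrow> complex) \<Rightarrow> bool" where
  "cc_on V f \<longleftrightarrow> continuous_on V f \<and>
     (\<exists>K. compact K \<and> K \<subseteq> V \<and> (\<forall>x. x \<notin> K \<longrightarrow> f x = 0))"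

definition xg_set :: "('g, 'u) groupoid \<Rightarrow> ('x, 'h, 'b, 'g, 'u) corresp \<Rightarrow> 'x set \<Rightarrow> 'g set \<Rightarrow> 'x set" where
  "xg_set G X V W = {ract X x g | x g. x \<in> V \<and> g \<in> W \<and> anc_s X x = rng G g}"

definition bra_set :: "('g, 'u) groupoid \<Rightarrow> ('x, 'h, 'b, 'g, 'u) corresp \<Rightarrow> 'x set \<Rightarrow> 'x set \<Rightarrow> 'g set" where
  "bra_set G X V1 V2 = {bra G X x1 x2 | x1 x2. x1 \<in> V1 \<and> x2 \<in> V2 \<and> same_orbit G X x1 x2}"

definition hx_set :: "('h, 'b) groupoid \<Rightarrow> ('x, 'h, 'b, 'g, 'u) corresp \<Rightarrow> 'h set \<Rightarrow> 'x set \<Rightarrow> 'x set" where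
  "hx_set H X Z V = {lact X h x | h x. h \<in> Z \<and> x \<in> V \<and> src H h = anc_r X x}"

definition conv_r :: "('g, 'u) groupoid \<Rightarrow> ('x, 'h, 'b, 'g, 'u) corresp
    \<Rightarrow> ('x \<Rightarrow> complex) \<Rightarrow> ('g \<Rightarrow> complex) \<Rightarrow> 'x \<Rightarrow> complex" where
  "conv_r G X xi gamma = (\<lambda>x. infsum (\<lambda>g. xi (ract X x g) * gamma (ginv G g)) {g. rng G g = anc_s X x})"

definition inner_prod :: "('g, 'u) groupoid \<Rightarrow> ('x, 'h, 'b, 'g, 'u) corresp
    \<Rightarrow> ('x \<Rightarrow> complex) \<Rightarrow> ('x \<Rightarrow> complex) \<Rightarrow> 'g \<Rightarrow> complex" where
  "inner_prod G X xi eta = (\<lambda>g. infsum (\<lambda>x. cnj (xi x) * eta (ract X x g)) {x. anc_s X x = rng G g})"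

definition conv_l :: "('h, 'b) groupoid \<Rightarrow> ('x, 'h, 'b, 'g, 'u) corresp
    \<Rightarrow> ('h \<Rightarrow> complex) \<Rightarrow> ('x \<Rightarrow> complex) \<Rightarrow> 'x \<Rightarrow> complex" where
  "conv_l H X zeta xi = (\<lambda>x. infsum (\<lambda>h. zeta h * xi (lact X (ginv H h) x)) {h. rng H h = anc_r X x})"

end

theory Submission
  imports Defs
begin

lemma lh_get:
  assumes "local_homeo f"
  obtains U where "\<And>x. open (U x) \<and> x \<in> U x \<and> open (f ` U x) \<and> homeomorphism (U x) (f ` U x) f (inv_into (U x) f)"
  using assms unfolding local_homeo_def by metis

lemma lh_cont: assumes "local_homeo f" shows "continuous_on UNIV f"
proof -
  obtain U where U: "\<And>x. open (U x) \<and> x \<in> U x \<and> open (f ` U x) \<and> homeomorphism (U x) (f ` U x) f (inv_into (U x) f)"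
    using lh_get[OF assms] by blast
  have eq: "UNIV = (\<Union>x\<in>UNIV. U x)" using U by blast
  have "continuous_on (\<Union>x\<in>UNIV. U x) f"
    by (rule continuous_on_open_UN) (use U homeomorphism_def in blast)+
  then show ?thesis using eq by simp
qed

lemma lh_open: assumes "local_homeo f" "open S" shows "open (f ` S)"
proof -
  obtain U where U: "\<And>x. open (U x) \<and> x \<in> U x \<and> open (f ` U x) \<and> homeomorphism (U x) (f ` U x) f (inv_into (U x) f)"
    using lh_get[OF assms(1)] by blast
  have eq: "f ` S = (\<Union>x\<in>S. f ` (U x \<inter> S))" using U by blast
  have "open (f ` (U x \<inter> S))" for x
  proof -
    have "openin (top_of_set (U x)) (U x \<inter> S)" using assms(2) openin_open_Int by blast
    then have "openin (top_of_set (f ` U x)) (f ` (U x \<inter> S))"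
      using homeomorphism_imp_open_map U by blast
    then show ?thesis using openin_open_trans U by blast
  qed
  then show ?thesis unfolding eq by blast
qed

lemma lh_inv: assumes "local_homeo f" "open V" "inj_on f V"
  shows "continuous_on (f ` V) (inv_into V f)"
proof -
  obtain U where U: "\<And>x. open (U x) \<and> x \<in> U x \<and> open (f ` U x) \<and> homeomorphism (U x) (f ` U x) f (inv_into (U x) f)"
    using lh_get[OF assms(1)] by blast
  have piece: "continuous_on (f ` (U x \<inter> V)) (inv_into V f)" if x: "x \<in> V" for x
  proof -
    let ?O = "f ` (U x \<inter> V)"
    have c1: "continuous_on ?O (inv_into (U x) f)"
      using U[of x] homeomorphism_def continuous_on_subset by (metis image_mono inf_le1)
    show "continuous_on ?O (inv_into V f)"
    proof (rule continuous_on_cong[THEN iffD1, OF refl _ c1])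
      fix z assume "z \<in> ?O"
      then obtain w where w: "w \<in> U x" "w \<in> V" "z = f w" by blast
      have "inv_into (U x) f z = w" using w homeomorphism_apply1 U by metis
      moreover have "inv_into V f z = w" using w assms(3) inv_into_f_f by metis
      ultimately show "inv_into (U x) f z = inv_into V f z" by simp
    qed
  qed
  have eq: "f ` V = (\<Union>x\<in>V. f ` (U x \<inter> V))" using U by blast
  have "continuous_on (\<Union>x\<in>V. f ` (U x \<inter> V)) (inv_into V f)"
    by (rule continuous_on_open_UN) (use piece lh_open[OF assms(1)] U assms(2) in blast)+
  then show ?thesis using eq by simp
qed

lemma cont_pair_comp:
  assumes "continuous_on T (\<lambda>(x, g). F x g)" "continuous_on S a" "continuous_on S b"
    "\<And>y. y \<in> S \<Longrightarrow> (a y, b y) \<in> T"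
  shows "continuous_on S (\<lambda>y. F (a y) (b y))"
  using continuous_on_compose2[OF assms(1) continuous_on_Pair[OF assms(2,3)]] assms(4) by auto

lemma infsum_one:
  assumes "a \<in> A" "\<And>k. k \<in> A \<Longrightarrow> k \<noteq> a \<Longrightarrow> f k = 0"
  shows "infsum f A = f a"
proof -
  have "infsum f A = infsum f {a}"
    by (rule infsum_cong_neutral) (use assms in auto)
  then show ?thesis by simp
qed

locale egpd =
  fixes G :: "('g::topological_space, 'u::t2_space) groupoid"
  assumes eg: "etale_groupoid G"
begin
lemma rm: "src G g = rng G h \<Longrightarrow> rng G (mult G g h) = rng G g" using eg unfolding etale_groupoid_def by blast
lemma sm: "src G g = rng G h \<Longrightarrow> src G (mult G g h) = src G h" using eg unfolding etale_groupoid_def by blast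
lemma assoc: "src G f = rng G g \<Longrightarrow> src G g = rng G h \<Longrightarrow> mult G (mult G f g) h = mult G f (mult G g h)"
  using eg unfolding etale_groupoid_def by blast
lemma ru[simp]: "rng G (uni G u) = u" using eg unfolding etale_groupoid_def by blast
lemma su[simp]: "src G (uni G u) = u" using eg unfolding etale_groupoid_def by blast
lemma ul: "mult G (uni G (rng G g)) g = g" using eg unfolding etale_groupoid_def by blast
lemma ur: "mult G g (uni G (src G g)) = g" using eg unfolding etale_groupoid_def by blast
lemma ri[simp]: "rng G (ginv G g) = src G g" using eg unfolding etale_groupoid_def by blast
lemma si[simp]: "src G (ginv G g) = rng G g" using eg unfolding etale_groupoid_def by blast
lemma mi: "mult G g (ginv G g) = uni G (rng G g)" using eg unfolding etale_groupoid_def by blast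
lemma im: "mult G (ginv G g) g = uni G (src G g)" using eg unfolding etale_groupoid_def by blast
lemma ii[simp]: "ginv G (ginv G g) = g"
proof -
  let ?k = "ginv G (ginv G g)"
  have "?k = mult G ?k (uni G (src G ?k))" by (metis ur)
  also have "\<dots> = mult G ?k (mult G (ginv G g) g)" using im by simp
  also have "\<dots> = mult G (mult G ?k (ginv G g)) g" using assoc by simp
  also have "\<dots> = mult G (uni G (rng G g)) g" using im[of "ginv G g"] by simp
  also have "\<dots> = g" using ul by simp
  finally show ?thesis .
qed
lemma lh_r: "local_homeo (rng G)" using eg unfolding etale_groupoid_def by blast
lemma lh_s: "local_homeo (src G)" using eg unfolding etale_groupoid_def by blast
lemma cont_r: "continuous_on UNIV (rng G)" using lh_cont lh_r by blast
lemma cont_s: "continuous_on UNIV (src G)" using lh_cont lh_s by blast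
lemma cont_i: "continuous_on UNIV (ginv G)" using eg unfolding etale_groupoid_def by blast
end

locale gcorr =
  fixes H :: "('h::topological_space, 'b::t2_space) groupoid"
    and G :: "('g::topological_space, 'a::t2_space) groupoid"
    and X :: "('x::topological_space, 'h, 'b, 'g, 'a) corresp"
  assumes corr: "groupoid_corresp H G X"
begin

sublocale gG: egpd G using corr unfolding groupoid_corresp_def egpd_def by blast
sublocale gH: egpd H using corr unfolding groupoid_corresp_def egpd_def by blast

lemma A_la_rs: "\<forall>h x. src H h = anc_r X x \<longrightarrow>
        anc_r X (lact X h x) = rng H h \<and> anc_s X (lact X h x) = anc_s X x"
  using corr unfolding groupoid_corresp_def by (elim conjE) assumption
lemma A_la_assoc: "\<forall>h1 h2 x. src H h1 = rng H h2 \<and> src H h2 = anc_r X x \<longrightarrow>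
        lact X h1 (lact X h2 x) = lact X (mult H h1 h2) x"
  using corr unfolding groupoid_corresp_def by (elim conjE) assumption
lemma A_la_u: "\<forall>x. lact X (uni H (anc_r X x)) x = x"
  using corr unfolding groupoid_corresp_def by (elim conjE) assumption
lemma A_ra_rs: "\<forall>x g. anc_s X x = rng G g \<longrightarrow>
        anc_s X (ract X x g) = src G g \<and> anc_r X (ract X x g) = anc_r X x"
  using corr unfolding groupoid_corresp_def by (elim conjE) assumption
lemma A_ra_assoc: "\<forall>x g1 g2. anc_s X x = rng G g1 \<and> src G g1 = rng G g2 \<longrightarrow>
        ract X (ract X x g1) g2 = ract X x (mult G g1 g2)"
  using corr unfolding groupoid_corresp_def by (elim conjE) assumption
lemma A_ra_u: "\<forall>x. ract X x (uni G (anc_s X x)) = x"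
  using corr unfolding groupoid_corresp_def by (elim conjE) assumption
lemma A_comm: "\<forall>h x g. src H h = anc_r X x \<and> anc_s X x = rng G g \<longrightarrow>
        ract X (lact X h x) g = lact X h (ract X x g)"
  using corr unfolding groupoid_corresp_def by (elim conjE) assumption
lemma cont_ar: "continuous_on UNIV (anc_r X)"
  using corr unfolding groupoid_corresp_def by (elim conjE) assumption
lemma cont_as: "continuous_on UNIV (anc_s X)"
  using corr unfolding groupoid_corresp_def by (elim conjE) assumption
lemma cont_la: "continuous_on {(h, x). src H h = anc_r X x} (\<lambda>(h, x). lact X h x)"
  using corr unfolding groupoid_corresp_def by (elim conjE) assumption
lemma cont_ra: "continuous_on {(x, g). anc_s X x = rng G g} (\<lambda>(x, g). ract X x g)"
  using corr unfolding groupoid_corresp_def by (elim conjE) assumption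
lemma lh_as: "local_homeo (anc_s X)"
  using corr unfolding groupoid_corresp_def by (elim conjE) assumption
lemma A_free: "\<forall>x g. anc_s X x = rng G g \<and> ract X x g = x \<longrightarrow> g = uni G (anc_s X x)"
  using corr unfolding groupoid_corresp_def by (elim conjE) assumption
lemma proper: "proper_map (subtopology euclidean {(x, g). anc_s X x = rng G g}) euclidean (\<lambda>(x, g). (ract X x g, x))"
  using corr unfolding groupoid_corresp_def by (elim conjE) assumption

lemma la_r: "src H h = anc_r X x \<Longrightarrow> anc_r X (lact X h x) = rng H h" using A_la_rs by blast
lemma la_s: "src H h = anc_r X x \<Longrightarrow> anc_s X (lact X h x) = anc_s X x" using A_la_rs by blast
lemma la_assoc: "src H h1 = rng H h2 \<Longrightarrow> src H h2 = anc_r X x \<Longrightarrow> lact X h1 (lact X h2 x) = lact X (mult H h1 h2) x"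
  using A_la_assoc by blast
lemma la_u: "lact X (uni H (anc_r X x)) x = x" using A_la_u by blast
lemma ra_s: "anc_s X x = rng G g \<Longrightarrow> anc_s X (ract X x g) = src G g" using A_ra_rs by blast
lemma ra_r: "anc_s X x = rng G g \<Longrightarrow> anc_r X (ract X x g) = anc_r X x" using A_ra_rs by blast
lemma ra_assoc: "anc_s X x = rng G g1 \<Longrightarrow> src G g1 = rng G g2 \<Longrightarrow> ract X (ract X x g1) g2 = ract X x (mult G g1 g2)"
  using A_ra_assoc by blast
lemma ra_u: "ract X x (uni G (anc_s X x)) = x" using A_ra_u by blast
lemma comm: "src H h = anc_r X x \<Longrightarrow> anc_s X x = rng G g \<Longrightarrow> ract X (lact X h x) g = lact X h (ract X x g)"
  using A_comm by blast
lemma free: "anc_s X x = rng G g \<Longrightarrow> ract X x g = x \<Longrightarrow> g = uni G (anc_s X x)" using A_free by blast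

lemma ra_inv: "anc_s X x = rng G g \<Longrightarrow> ract X (ract X x g) (ginv G g) = x"
  using ra_assoc[of x g "ginv G g"] gG.mi[of g] ra_u[of x] by simp

lemma ra_inv2: "anc_s X y = src G g \<Longrightarrow> ract X (ract X y (ginv G g)) g = y"
  using ra_inv[of y "ginv G g"] by simp

lemma ra_cancel:
  assumes "anc_s X x = rng G a" "anc_s X x = rng G b" "ract X x a = ract X x b"
  shows "a = b"
proof -
  have sab: "src G a = src G b" using assms ra_s by metis
  have "ract X (ract X x a) (ginv G b) = x" using assms ra_inv by metis
  moreover have "ract X (ract X x a) (ginv G b) = ract X x (mult G a (ginv G b))"
    using ra_assoc[of x a "ginv G b"] assms sab by simp
  ultimately have "ract X x (mult G a (ginv G b)) = x" by simp
  moreover have "anc_s X x = rng G (mult G a (ginv G b))" using gG.rm assms sab by simp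
  ultimately have e: "mult G a (ginv G b) = uni G (rng G b)" using free assms by metis
  have "a = mult G a (uni G (src G a))" by (metis gG.ur)
  also have "\<dots> = mult G a (mult G (ginv G b) b)" using gG.im sab by simp
  also have "\<dots> = mult G (mult G a (ginv G b)) b" using gG.assoc sab by simp
  also have "\<dots> = b" using e gG.ul by simp
  finally show ?thesis .
qed

lemma la_inv: "src H h = anc_r X x \<Longrightarrow> lact X (ginv H h) (lact X h x) = x"
  using la_assoc[of "ginv H h" h x] gH.im[of h] la_u[of x] by simp

lemma la_inv2: "anc_r X y = rng H h \<Longrightarrow> lact X h (lact X (ginv H h) y) = y"
  using la_inv[of "ginv H h" y] by simp

lemma so_intro: "anc_s X x = rng G g \<Longrightarrow> same_orbit G X x (ract X x g)"
  unfolding same_orbit_def by blast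

lemma bra_eq: "anc_s X x = rng G g \<Longrightarrow> bra G X x (ract X x g) = g"
  unfolding bra_def by (rule the_equality) (auto intro: ra_cancel)

lemma so_bra: "same_orbit G X x y \<Longrightarrow> anc_s X x = rng G (bra G X x y) \<and> y = ract X x (bra G X x y)"
  unfolding same_orbit_def using bra_eq by metis

lemma so_sym: "same_orbit G X x y \<Longrightarrow> same_orbit G X y x"
  unfolding same_orbit_def by (metis ra_inv ra_s gG.ri)

lemma so_trans: "same_orbit G X x y \<Longrightarrow> same_orbit G X y z \<Longrightarrow> same_orbit G X x z"
  unfolding same_orbit_def by (metis ra_assoc ra_s gG.rm)

end

locale lctx = gcorr H G X for H :: "('h::topological_space, 'b::t2_space) groupoid"
    and G :: "('g::topological_space, 'a::t2_space) groupoid"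
    and X :: "('x::topological_space, 'h, 'b, 'g, 'a) corresp" +
  fixes V1 V2 :: "'x set" and W :: "'g set" and Z :: "'h set"
    and xi eta :: "'x \<Rightarrow> complex" and gamma :: "'g \<Rightarrow> complex" and zeta :: "'h \<Rightarrow> complex"
  assumes V1: "xslice G X V1" and V2: "xslice G X V2"
    and W: "gslice G W" and Z: "gslice H Z"
    and xi: "cc_on V1 xi" and eta: "cc_on V2 eta"
    and gamma: "cc_on W gamma" and zeta: "cc_on Z zeta"
begin

lemma V1o: "open V1" and V1i: "inj_on (anc_s X) V1"
  and V1so: "x1 \<in> V1 \<Longrightarrow> x2 \<in> V1 \<Longrightarrow> same_orbit G X x1 x2 \<Longrightarrow> x1 = x2"
  using V1 unfolding xslice_def by blast+
lemma V2o: "open V2" and V2i: "inj_on (anc_s X) V2"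
  and V2so: "x1 \<in> V2 \<Longrightarrow> x2 \<in> V2 \<Longrightarrow> same_orbit G X x1 x2 \<Longrightarrow> x1 = x2"
  using V2 unfolding xslice_def by blast+
lemma Wo: "open W" and Ws: "inj_on (src G) W" and Wr: "inj_on (rng G) W"
  using W unfolding gslice_def by blast+
lemma Zo: "open Z" and Zs: "inj_on (src H) Z" and Zr: "inj_on (rng H) Z"
  using Z unfolding gslice_def by blast+

lemma cc_supp: "cc_on V f \<Longrightarrow> f x \<noteq> 0 \<Longrightarrow> x \<in> V"
  unfolding cc_on_def by blast

lemma xiS: "xi x \<noteq> 0 \<Longrightarrow> x \<in> V1" using cc_supp[OF xi] .
lemma etaS: "eta x \<noteq> 0 \<Longrightarrow> x \<in> V2" using cc_supp[OF eta] .
lemma gammaS: "gamma x \<noteq> 0 \<Longrightarrow> x \<in> W" using cc_supp[OF gamma] .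
lemma zetaS: "zeta x \<noteq> 0 \<Longrightarrow> x \<in> Z" using cc_supp[OF zeta] .

definition "rho = inv_into W (src G)"
definition "phi y = ract X y (ginv G (rho (anc_s X y)))"
definition "sig = inv_into V1 (anc_s X)"
definition "chi g = ract X (sig (rng G g)) g"
definition "tau = inv_into Z (rng H)"
definition "psi y = lact X (ginv H (tau (anc_r X y))) y"

lemma rho_W: "u \<in> src G ` W \<Longrightarrow> rho u \<in> W \<and> src G (rho u) = u"
  unfolding rho_def by (simp add: inv_into_into f_inv_into_f)

lemma rho_src: "g \<in> W \<Longrightarrow> rho (src G g) = g"
  unfolding rho_def using Ws by (simp add: inv_into_f_f)

lemma xgA: "x \<in> V1 \<Longrightarrow> g \<in> W \<Longrightarrow> anc_s X x = rng G g \<Longrightarrow>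
   anc_s X (ract X x g) = src G g \<and> rho (anc_s X (ract X x g)) = g \<and> phi (ract X x g) = x"
  using ra_s rho_src ra_inv unfolding phi_def by metis

lemma xgB: "anc_s X y \<in> src G ` W \<Longrightarrow>
   rho (anc_s X y) \<in> W \<and> anc_s X (phi y) = rng G (rho (anc_s X y)) \<and> ract X (phi y) (rho (anc_s X y)) = y"
  using rho_W[of "anc_s X y"] ra_s[of y "ginv G (rho (anc_s X y))"] ra_inv2[of y "rho (anc_s X y)"]
  unfolding phi_def by simp

lemma xg_char: "xg_set G X V1 W = {y. anc_s X y \<in> src G ` W \<and> phi y \<in> V1}"
proof (intro equalityI subsetI)
  fix y assume "y \<in> xg_set G X V1 W"
  then obtain x g where "x \<in> V1" "g \<in> W" "anc_s X x = rng G g" "y = ract X x g"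
    unfolding xg_set_def by blast
  then show "y \<in> {y. anc_s X y \<in> src G ` W \<and> phi y \<in> V1}" using xgA by auto
next
  fix y assume "y \<in> {y. anc_s X y \<in> src G ` W \<and> phi y \<in> V1}"
  then have "anc_s X (y::'x) \<in> src G ` W" "phi y \<in> V1" by auto
  then show "y \<in> xg_set G X V1 W" using xgB[of y] unfolding xg_set_def by force
qed

lemma O1_open: "open (anc_s X -` (src G ` W))"
  using open_vimage[OF lh_open[OF gG.lh_s Wo] cont_as] .

lemma rho_cont: "continuous_on (src G ` W) rho"
  unfolding rho_def using lh_inv[OF gG.lh_s Wo Ws] .

lemma phi_cont: "continuous_on (anc_s X -` (src G ` W)) phi"
proof -
  let ?O = "anc_s X -` (src G ` W)"
  have c1: "continuous_on ?O (\<lambda>y. rho (anc_s X y))"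
    by (rule continuous_on_compose2[OF rho_cont continuous_on_subset[OF cont_as]]) auto
  have c2: "continuous_on ?O (\<lambda>y. ginv G (rho (anc_s X y)))"
    by (rule continuous_on_compose2[OF gG.cont_i c1]) auto
  show ?thesis unfolding phi_def
    by (rule cont_pair_comp[OF cont_ra continuous_on_id c2]) (use rho_W in auto)
qed

lemma xg_open: "open (xg_set G X V1 W)"
proof -
  have "xg_set G X V1 W = phi -` V1 \<inter> (anc_s X -` (src G ` W))" using xg_char by auto
  then show ?thesis using continuous_on_open_vimage[OF O1_open] phi_cont V1o by metis
qed

lemma conv_r_eq: "conv_r G X xi gamma y =
   (if y \<in> xg_set G X V1 W then xi (phi y) * gamma (rho (anc_s X y)) else 0)"
proof (cases "y \<in> xg_set G X V1 W")
  case True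
  then have u: "anc_s X y \<in> src G ` W" using xg_char by blast
  let ?g = "rho (anc_s X y)"
  have g: "?g \<in> W" "src G ?g = anc_s X y" using rho_W[OF u] by auto
  have "conv_r G X xi gamma y = xi (ract X y (ginv G ?g)) * gamma (ginv G (ginv G ?g))"
    unfolding conv_r_def
  proof (rule infsum_one)
    show "ginv G ?g \<in> {g. rng G g = anc_s X y}" using g by simp
    fix k assume k: "k \<in> {g. rng G g = anc_s X y}" "k \<noteq> ginv G ?g"
    show "xi (ract X y k) * gamma (ginv G k) = 0"
    proof (rule ccontr)
      assume "xi (ract X y k) * gamma (ginv G k) \<noteq> 0"
      then have "ginv G k \<in> W" using gammaS by auto
      moreover have "src G (ginv G k) = src G ?g" using k g by simp
      ultimately have "ginv G k = ?g" using Ws g inj_onD by metis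
      then have "k = ginv G ?g" using gG.ii by metis
      then show False using k by blast
    qed
  qed
  then show ?thesis using True unfolding phi_def by simp
next
  case False
  have "conv_r G X xi gamma y = 0"
    unfolding conv_r_def
  proof (rule infsum_0)
    fix k assume k: "k \<in> {g. rng G g = anc_s X y}"
    show "xi (ract X y k) * gamma (ginv G k) = 0"
    proof (rule ccontr)
      assume "xi (ract X y k) * gamma (ginv G k) \<noteq> 0"
      then have a: "ginv G k \<in> W" "ract X y k \<in> V1" using gammaS xiS by auto
      have "anc_s X (ract X y k) = rng G (ginv G k)" using k ra_s by simp
      moreover have "ract X (ract X y k) (ginv G k) = y" using k ra_inv by simp
      ultimately have "y \<in> xg_set G X V1 W" using a unfolding xg_set_def by force
      then show False using False by blast
    qed
  qed
  then show ?thesis using False by simp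
qed

end

context lctx begin

lemma sig_V: "u \<in> anc_s X ` V1 \<Longrightarrow> sig u \<in> V1 \<and> anc_s X (sig u) = u"
  unfolding sig_def by (simp add: inv_into_into f_inv_into_f)

lemma sig_as: "x \<in> V1 \<Longrightarrow> sig (anc_s X x) = x"
  unfolding sig_def using V1i by (simp add: inv_into_f_f)

lemma bsA: "x1 \<in> V1 \<Longrightarrow> same_orbit G X x1 x2 \<Longrightarrow>
   rng G (bra G X x1 x2) = anc_s X x1 \<and> sig (rng G (bra G X x1 x2)) = x1 \<and> chi (bra G X x1 x2) = x2"
  using so_bra[of x1 x2] sig_as[of x1] unfolding chi_def by metis

lemma bs_char: "bra_set G X V1 V2 = {g. rng G g \<in> anc_s X ` V1 \<and> chi g \<in> V2}"
proof (intro equalityI subsetI)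
  fix g assume "g \<in> bra_set G X V1 V2"
  then obtain x1 x2 where "x1 \<in> V1" "x2 \<in> V2" "same_orbit G X x1 x2" "g = bra G X x1 x2"
    unfolding bra_set_def by blast
  then show "g \<in> {g. rng G g \<in> anc_s X ` V1 \<and> chi g \<in> V2}" using bsA by auto
next
  fix g assume "g \<in> {g. rng G g \<in> anc_s X ` V1 \<and> chi g \<in> V2}"
  then have a: "rng G g \<in> anc_s X ` V1" "chi g \<in> V2" by auto
  let ?x1 = "sig (rng G g)"
  have x1: "?x1 \<in> V1" "anc_s X ?x1 = rng G g" using sig_V[OF a(1)] by auto
  have "same_orbit G X ?x1 (chi g)" "bra G X ?x1 (chi g) = g"
    unfolding chi_def using so_intro bra_eq x1 by auto
  then show "g \<in> bra_set G X V1 V2" unfolding bra_set_def using x1 a by force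
qed

lemma O3_open: "open (rng G -` (anc_s X ` V1))"
  using open_vimage[OF lh_open[OF lh_as V1o] gG.cont_r] .

lemma sig_cont: "continuous_on (anc_s X ` V1) sig"
  unfolding sig_def using lh_inv[OF lh_as V1o V1i] .

lemma sigr_cont: "continuous_on (rng G -` (anc_s X ` V1)) (\<lambda>g. sig (rng G g))"
  by (rule continuous_on_compose2[OF sig_cont continuous_on_subset[OF gG.cont_r]]) auto

lemma chi_cont: "continuous_on (rng G -` (anc_s X ` V1)) chi"
  unfolding chi_def
  by (rule cont_pair_comp[OF cont_ra sigr_cont continuous_on_id]) (use sig_V in auto)

lemma bs_open: "open (bra_set G X V1 V2)"
proof -
  have "bra_set G X V1 V2 = chi -` V2 \<inter> (rng G -` (anc_s X ` V1))" using bs_char by auto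
  then show ?thesis using continuous_on_open_vimage[OF O3_open] chi_cont V2o by metis
qed

lemma inner_eq: "inner_prod G X xi eta g =
   (if g \<in> bra_set G X V1 V2 then cnj (xi (sig (rng G g))) * eta (chi g) else 0)"
proof (cases "g \<in> bra_set G X V1 V2")
  case True
  then have u: "rng G g \<in> anc_s X ` V1" using bs_char by blast
  let ?x = "sig (rng G g)"
  have x: "?x \<in> V1" "anc_s X ?x = rng G g" using sig_V[OF u] by auto
  have "inner_prod G X xi eta g = cnj (xi ?x) * eta (ract X ?x g)"
    unfolding inner_prod_def
  proof (rule infsum_one)
    show "?x \<in> {x. anc_s X x = rng G g}" using x by simp
    fix k assume k: "k \<in> {x. anc_s X x = rng G g}" "k \<noteq> ?x"
    show "cnj (xi k) * eta (ract X k g) = 0"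
    proof (rule ccontr)
      assume "cnj (xi k) * eta (ract X k g) \<noteq> 0"
      then have "k \<in> V1" using xiS by auto
      then have "k = ?x" using V1i x k inj_onD by fastforce
      then show False using k by blast
    qed
  qed
  then show ?thesis using True unfolding chi_def by simp
next
  case False
  have "inner_prod G X xi eta g = 0"
    unfolding inner_prod_def
  proof (rule infsum_0)
    fix k assume k: "k \<in> {x. anc_s X x = rng G g}"
    show "cnj (xi k) * eta (ract X k g) = 0"
    proof (rule ccontr)
      assume "cnj (xi k) * eta (ract X k g) \<noteq> 0"
      then have a: "k \<in> V1" "ract X k g \<in> V2" using etaS xiS by auto
      have "same_orbit G X k (ract X k g)" "bra G X k (ract X k g) = g"
        using k so_intro bra_eq by auto
      then have "g \<in> bra_set G X V1 V2" using a unfolding bra_set_def by force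
      then show False using False by blast
    qed
  qed
  then show ?thesis using False by simp
qed

lemma tau_Z: "u \<in> rng H ` Z \<Longrightarrow> tau u \<in> Z \<and> rng H (tau u) = u"
  unfolding tau_def by (simp add: inv_into_into f_inv_into_f)

lemma tau_r: "h \<in> Z \<Longrightarrow> tau (rng H h) = h"
  unfolding tau_def using Zr by (simp add: inv_into_f_f)

lemma hxA: "h \<in> Z \<Longrightarrow> x \<in> V1 \<Longrightarrow> src H h = anc_r X x \<Longrightarrow>
   anc_r X (lact X h x) = rng H h \<and> tau (anc_r X (lact X h x)) = h \<and> psi (lact X h x) = x"
  using la_r tau_r la_inv unfolding psi_def by metis

lemma hxB: "anc_r X y \<in> rng H ` Z \<Longrightarrow>
   tau (anc_r X y) \<in> Z \<and> src H (tau (anc_r X y)) = anc_r X (psi y) \<and> lact X (tau (anc_r X y)) (psi y) = y"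
  using tau_Z[of "anc_r X y"] la_r[of "ginv H (tau (anc_r X y))" y] la_inv2[of y "tau (anc_r X y)"]
  unfolding psi_def by simp

lemma hx_char: "hx_set H X Z V1 = {y. anc_r X y \<in> rng H ` Z \<and> psi y \<in> V1}"
proof (intro equalityI subsetI)
  fix y assume "y \<in> hx_set H X Z V1"
  then obtain h x where "h \<in> Z" "x \<in> V1" "src H h = anc_r X x" "y = lact X h x"
    unfolding hx_set_def by blast
  then show "y \<in> {y. anc_r X y \<in> rng H ` Z \<and> psi y \<in> V1}" using hxA by auto
next
  fix y assume "y \<in> {y. anc_r X y \<in> rng H ` Z \<and> psi y \<in> V1}"
  then have "anc_r X (y::'x) \<in> rng H ` Z" "psi y \<in> V1" by auto
  then show "y \<in> hx_set H X Z V1" using hxB[of y] unfolding hx_set_def by force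
qed

lemma O2_open: "open (anc_r X -` (rng H ` Z))"
  using open_vimage[OF lh_open[OF gH.lh_r Zo] cont_ar] .

lemma tau_cont: "continuous_on (rng H ` Z) tau"
  unfolding tau_def using lh_inv[OF gH.lh_r Zo Zr] .

lemma taur_cont: "continuous_on (anc_r X -` (rng H ` Z)) (\<lambda>y. tau (anc_r X y))"
  by (rule continuous_on_compose2[OF tau_cont continuous_on_subset[OF cont_ar]]) auto

lemma psi_cont: "continuous_on (anc_r X -` (rng H ` Z)) psi"
proof -
  have c2: "continuous_on (anc_r X -` (rng H ` Z)) (\<lambda>y. ginv H (tau (anc_r X y)))"
    by (rule continuous_on_compose2[OF gH.cont_i taur_cont]) auto
  show ?thesis unfolding psi_def
    by (rule cont_pair_comp[OF cont_la c2 continuous_on_id]) (use tau_Z in auto)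
qed

lemma hx_open: "open (hx_set H X Z V1)"
proof -
  have "hx_set H X Z V1 = psi -` V1 \<inter> (anc_r X -` (rng H ` Z))" using hx_char by auto
  then show ?thesis using continuous_on_open_vimage[OF O2_open] psi_cont V1o by metis
qed

lemma conv_l_eq: "conv_l H X zeta xi y =
   (if y \<in> hx_set H X Z V1 then zeta (tau (anc_r X y)) * xi (psi y) else 0)"
proof (cases "y \<in> hx_set H X Z V1")
  case True
  then have u: "anc_r X y \<in> rng H ` Z" using hx_char by blast
  let ?h = "tau (anc_r X y)"
  have h: "?h \<in> Z" "rng H ?h = anc_r X y" using tau_Z[OF u] by auto
  have "conv_l H X zeta xi y = zeta ?h * xi (lact X (ginv H ?h) y)"
    unfolding conv_l_def
  proof (rule infsum_one)
    show "?h \<in> {h. rng H h = anc_r X y}" using h by simp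
    fix k assume k: "k \<in> {h. rng H h = anc_r X y}" "k \<noteq> ?h"
    show "zeta k * xi (lact X (ginv H k) y) = 0"
    proof (rule ccontr)
      assume "zeta k * xi (lact X (ginv H k) y) \<noteq> 0"
      then have "k \<in> Z" using zetaS by auto
      then have "k = ?h" using Zr h k inj_onD by fastforce
      then show False using k by blast
    qed
  qed
  then show ?thesis using True unfolding psi_def by simp
next
  case False
  have "conv_l H X zeta xi y = 0"
    unfolding conv_l_def
  proof (rule infsum_0)
    fix k assume k: "k \<in> {h. rng H h = anc_r X y}"
    show "zeta k * xi (lact X (ginv H k) y) = 0"
    proof (rule ccontr)
      assume "zeta k * xi (lact X (ginv H k) y) \<noteq> 0"
      then have a: "k \<in> Z" "lact X (ginv H k) y \<in> V1" using zetaS xiS by auto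
      have "src H k = anc_r X (lact X (ginv H k) y)" using k la_r by simp
      moreover have "lact X k (lact X (ginv H k) y) = y" using k la_inv2 by simp
      ultimately have "y \<in> hx_set H X Z V1" using a unfolding hx_set_def by force
      then show False using False by blast
    qed
  qed
  then show ?thesis using False by simp
qed

end

lemma closed_fiber:
  fixes f :: "'a::topological_space \<Rightarrow> 'c::t2_space" and g :: "'b::topological_space \<Rightarrow> 'c"
  assumes "continuous_on UNIV f" "continuous_on UNIV g"
  shows "closed {(x, y). f x = g y}"
proof -
  have e: "{(x, y). f x = g y} = {p. f (fst p) = g (snd p)}" by auto
  have c1: "continuous_on UNIV (\<lambda>p::'a\<times>'b. f (fst p))"
    by (rule continuous_on_compose2[OF assms(1) continuous_on_fst[OF continuous_on_id]]) auto
  have c2: "continuous_on UNIV (\<lambda>p::'a\<times>'b. g (snd p))"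
    by (rule continuous_on_compose2[OF assms(2) continuous_on_snd[OF continuous_on_id]]) auto
  show ?thesis unfolding e by (rule closed_Collect_eq[OF c1 c2])
qed

lemma cc_get: assumes "cc_on V f"
  obtains K where "compact K" "K \<subseteq> V" "\<And>x. f x \<noteq> 0 \<Longrightarrow> x \<in> K"
  using assms unfolding cc_on_def by blast

context lctx begin

lemma xi_c: "continuous_on V1 xi" using xi unfolding cc_on_def by blast
lemma eta_c: "continuous_on V2 eta" using eta unfolding cc_on_def by blast
lemma gamma_c: "continuous_on W gamma" using gamma unfolding cc_on_def by blast
lemma zeta_c: "continuous_on Z zeta" using zeta unfolding cc_on_def by blast

lemma cc_r: "cc_on (xg_set G X V1 W) (conv_r G X xi gamma)"
proof -
  let ?S = "xg_set G X V1 W"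
  have sub: "?S \<subseteq> anc_s X -` (src G ` W)" using xg_char by auto
  have c1: "continuous_on ?S (\<lambda>y. xi (phi y))"
    by (rule continuous_on_compose2[OF xi_c continuous_on_subset[OF phi_cont sub]]) (use xg_char in auto)
  have c2: "continuous_on ?S (\<lambda>y. gamma (rho (anc_s X y)))"
  proof (rule continuous_on_compose2[OF gamma_c])
    show "continuous_on ?S (\<lambda>y. rho (anc_s X y))"
      by (rule continuous_on_compose2[OF rho_cont continuous_on_subset[OF cont_as]]) (use sub in auto)
    show "(\<lambda>y. rho (anc_s X y)) ` ?S \<subseteq> W" using sub rho_W by auto
  qed
  have cm: "continuous_on ?S (\<lambda>y. xi (phi y) * gamma (rho (anc_s X y)))" by (rule continuous_on_mult[OF c1 c2])
  have cont: "continuous_on ?S (conv_r G X xi gamma)"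
  proof (rule continuous_on_cong[THEN iffD1, OF refl _ cm])
    fix y assume "y \<in> ?S"
    then show "xi (phi y) * gamma (rho (anc_s X y)) = conv_r G X xi gamma y" by (simp add: conv_r_eq)
  qed
  obtain K1 where K1: "compact K1" "K1 \<subseteq> V1" "\<And>x. xi x \<noteq> 0 \<Longrightarrow> x \<in> K1" using cc_get[OF xi] by blast
  obtain K2 where K2: "compact K2" "K2 \<subseteq> W" "\<And>x. gamma x \<noteq> 0 \<Longrightarrow> x \<in> K2" using cc_get[OF gamma] by blast
  let ?F = "{(x, g). anc_s X x = rng G g}"
  let ?K = "(\<lambda>(x, g). ract X x g) ` (K1 \<times> K2 \<inter> ?F)"
  have "compact (K1 \<times> K2 \<inter> ?F)"
    by (rule compact_Int_closed[OF compact_Times[OF K1(1) K2(1)] closed_fiber[OF cont_as gG.cont_r]])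
  then have "compact ?K"
    by (rule compact_continuous_image[OF continuous_on_subset[OF cont_ra], rotated]) auto
  moreover have "?K \<subseteq> ?S"
  proof
    fix y assume "y \<in> ?K"
    then obtain x g where "x \<in> K1" "g \<in> K2" "anc_s X x = rng G g" "y = ract X x g" by auto
    then show "y \<in> ?S" unfolding xg_set_def using K1 K2 by blast
  qed
  moreover have "conv_r G X xi gamma y = 0" if "y \<notin> ?K" for y
  proof (rule ccontr)
    assume a: "conv_r G X xi gamma y \<noteq> 0"
    then have yS: "y \<in> ?S" and nz: "xi (phi y) \<noteq> 0" "gamma (rho (anc_s X y)) \<noteq> 0"
      by (auto simp: conv_r_eq split: if_splits)
    have u: "anc_s X y \<in> src G ` W" using yS xg_char by blast
    have "(phi y, rho (anc_s X y)) \<in> K1 \<times> K2 \<inter> ?F" using nz K1(3) K2(3) xgB[OF u] by simp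
    moreover have "y = (\<lambda>(x, g). ract X x g) (phi y, rho (anc_s X y))" using xgB[OF u] by simp
    ultimately have "y \<in> ?K" by (rule rev_image_eqI)
    then show False using that by blast
  qed
  ultimately show ?thesis unfolding cc_on_def using cont by blast
qed

lemma cc_b: "cc_on (bra_set G X V1 V2) (inner_prod G X xi eta)"
proof -
  let ?S = "bra_set G X V1 V2"
  have sub: "?S \<subseteq> rng G -` (anc_s X ` V1)" using bs_char by auto
  have c1: "continuous_on ?S (\<lambda>g. cnj (xi (sig (rng G g))))"
    by (rule continuous_on_cnj, rule continuous_on_compose2[OF xi_c continuous_on_subset[OF sigr_cont sub]])
       (use sub sig_V in auto)
  have c2: "continuous_on ?S (\<lambda>g. eta (chi g))"
    by (rule continuous_on_compose2[OF eta_c continuous_on_subset[OF chi_cont sub]]) (use bs_char in auto)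
  have cm: "continuous_on ?S (\<lambda>g. cnj (xi (sig (rng G g))) * eta (chi g))" by (rule continuous_on_mult[OF c1 c2])
  have cont: "continuous_on ?S (inner_prod G X xi eta)"
  proof (rule continuous_on_cong[THEN iffD1, OF refl _ cm])
    fix g assume "g \<in> ?S"
    then show "cnj (xi (sig (rng G g))) * eta (chi g) = inner_prod G X xi eta g" by (simp add: inner_eq)
  qed
  obtain K1 where K1: "compact K1" "K1 \<subseteq> V1" "\<And>x. xi x \<noteq> 0 \<Longrightarrow> x \<in> K1" using cc_get[OF xi] by blast
  obtain K2 where K2: "compact K2" "K2 \<subseteq> V2" "\<And>x. eta x \<noteq> 0 \<Longrightarrow> x \<in> K2" using cc_get[OF eta] by blast
  let ?F = "{(x, g). anc_s X x = rng G g}"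
  let ?T = "subtopology euclidean ?F"
  let ?P = "{p \<in> topspace ?T. (\<lambda>(x, g). (ract X x g, x)) p \<in> K2 \<times> K1}"
  have cK: "compactin euclidean (K2 \<times> K1)"
    unfolding compactin_euclidean_iff by (rule compact_Times[OF K2(1) K1(1)])
  have "compactin ?T ?P" by (rule compactin_proper_map_preimage[OF proper cK])
  then have "compactin euclidean ?P" by (simp add: compactin_subtopology)
  then have "compact ?P" unfolding compactin_euclidean_iff .
  then have "compact (snd ` ?P)" by (rule compact_continuous_image[OF continuous_on_snd[OF continuous_on_id], rotated])
  moreover have "snd ` ?P \<subseteq> ?S"
  proof
    fix g assume "g \<in> snd ` ?P"
    then obtain p where p: "g = snd p" "p \<in> ?P" by (rule imageE)
    obtain x g' where pe: "p = (x, g')" by (cases p)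
    have x: "anc_s X x = rng G g" "ract X x g \<in> K2" "x \<in> K1" using p pe by simp_all
    then have "same_orbit G X x (ract X x g)" "bra G X x (ract X x g) = g" using so_intro bra_eq by auto
    moreover have "x \<in> V1" "ract X x g \<in> V2" using x K1(2) K2(2) by auto
    ultimately show "g \<in> ?S" unfolding bra_set_def
      by (intro CollectI exI[of _ x] exI[of _ "ract X x g"]) simp
  qed
  moreover have "inner_prod G X xi eta g = 0" if "g \<notin> snd ` ?P" for g
  proof (rule ccontr)
    assume a: "inner_prod G X xi eta g \<noteq> 0"
    then have gS: "g \<in> ?S" and nz: "xi (sig (rng G g)) \<noteq> 0" "eta (chi g) \<noteq> 0"
      by (auto simp: inner_eq split: if_splits)
    have u: "rng G g \<in> anc_s X ` V1" using gS bs_char by blast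
    have "(sig (rng G g), g) \<in> ?P" using nz K1(3) K2(3) sig_V[OF u] unfolding chi_def by simp
    moreover have "g = snd (sig (rng G g), g)" by simp
    ultimately have "g \<in> snd ` ?P" by (rule rev_image_eqI)
    then show False using that by blast
  qed
  ultimately show ?thesis unfolding cc_on_def using cont by blast
qed

lemma cc_l: "cc_on (hx_set H X Z V1) (conv_l H X zeta xi)"
proof -
  let ?S = "hx_set H X Z V1"
  have sub: "?S \<subseteq> anc_r X -` (rng H ` Z)" using hx_char by auto
  have c1: "continuous_on ?S (\<lambda>y. xi (psi y))"
    by (rule continuous_on_compose2[OF xi_c continuous_on_subset[OF psi_cont sub]]) (use hx_char in auto)
  have c2: "continuous_on ?S (\<lambda>y. zeta (tau (anc_r X y)))"
    by (rule continuous_on_compose2[OF zeta_c continuous_on_subset[OF taur_cont sub]]) (use sub tau_Z in auto)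
  have cm: "continuous_on ?S (\<lambda>y. zeta (tau (anc_r X y)) * xi (psi y))" by (rule continuous_on_mult[OF c2 c1])
  have cont: "continuous_on ?S (conv_l H X zeta xi)"
  proof (rule continuous_on_cong[THEN iffD1, OF refl _ cm])
    fix y assume "y \<in> ?S"
    then show "zeta (tau (anc_r X y)) * xi (psi y) = conv_l H X zeta xi y" by (simp add: conv_l_eq)
  qed
  obtain K1 where K1: "compact K1" "K1 \<subseteq> V1" "\<And>x. xi x \<noteq> 0 \<Longrightarrow> x \<in> K1" using cc_get[OF xi] by blast
  obtain K3 where K3: "compact K3" "K3 \<subseteq> Z" "\<And>x. zeta x \<noteq> 0 \<Longrightarrow> x \<in> K3" using cc_get[OF zeta] by blast
  let ?F = "{(h, x). src H h = anc_r X x}"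
  let ?K = "(\<lambda>(h, x). lact X h x) ` (K3 \<times> K1 \<inter> ?F)"
  have "compact (K3 \<times> K1 \<inter> ?F)"
    by (rule compact_Int_closed[OF compact_Times[OF K3(1) K1(1)] closed_fiber[OF gH.cont_s cont_ar]])
  then have "compact ?K"
    by (rule compact_continuous_image[OF continuous_on_subset[OF cont_la], rotated]) auto
  moreover have "?K \<subseteq> ?S"
  proof
    fix y assume "y \<in> ?K"
    then obtain h x where "h \<in> K3" "x \<in> K1" "src H h = anc_r X x" "y = lact X h x" by auto
    then show "y \<in> ?S" unfolding hx_set_def using K1 K3 by blast
  qed
  moreover have "conv_l H X zeta xi y = 0" if "y \<notin> ?K" for y
  proof (rule ccontr)
    assume a: "conv_l H X zeta xi y \<noteq> 0"
    then have yS: "y \<in> ?S" and nz: "xi (psi y) \<noteq> 0" "zeta (tau (anc_r X y)) \<noteq> 0"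
      by (auto simp: conv_l_eq split: if_splits)
    have u: "anc_r X y \<in> rng H ` Z" using yS hx_char by blast
    have "(tau (anc_r X y), psi y) \<in> K3 \<times> K1 \<inter> ?F" using nz K1(3) K3(3) hxB[OF u] by simp
    moreover have "y = (\<lambda>(h, x). lact X h x) (tau (anc_r X y), psi y)" using hxB[OF u] by simp
    ultimately have "y \<in> ?K" by (rule rev_image_eqI)
    then show False using that by blast
  qed
  ultimately show ?thesis unfolding cc_on_def using cont by blast
qed

end

context lctx begin

lemma xg_mem: "x \<in> V1 \<Longrightarrow> g \<in> W \<Longrightarrow> anc_s X x = rng G g \<Longrightarrow> ract X x g \<in> xg_set G X V1 W"
  unfolding xg_set_def by blast
lemma bs_mem: "x1 \<in> V1 \<Longrightarrow> x2 \<in> V2 \<Longrightarrow> same_orbit G X x1 x2 \<Longrightarrow> bra G X x1 x2 \<in> bra_set G X V1 V2"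
  unfolding bra_set_def by blast
lemma hx_mem: "h \<in> Z \<Longrightarrow> x \<in> V1 \<Longrightarrow> src H h = anc_r X x \<Longrightarrow> lact X h x \<in> hx_set H X Z V1"
  unfolding hx_set_def by blast

lemma val_r: "x \<in> V1 \<Longrightarrow> g \<in> W \<Longrightarrow> anc_s X x = rng G g \<Longrightarrow> conv_r G X xi gamma (ract X x g) = xi x * gamma g"
  using conv_r_eq xg_mem xgA rho_src by simp
lemma val_b: "x1 \<in> V1 \<Longrightarrow> x2 \<in> V2 \<Longrightarrow> same_orbit G X x1 x2 \<Longrightarrow> inner_prod G X xi eta (bra G X x1 x2) = cnj (xi x1) * eta x2"
  using inner_eq bs_mem bsA sig_as by simp
lemma val_l: "h \<in> Z \<Longrightarrow> x \<in> V1 \<Longrightarrow> src H h = anc_r X x \<Longrightarrow> conv_l H X zeta xi (lact X h x) = zeta h * xi x"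
  using conv_l_eq hx_mem hxA tau_r by simp

lemma xg_uniq:
  assumes "x \<in> V1" "x' \<in> V1" "g \<in> W" "g' \<in> W" "anc_s X x = rng G g" "anc_s X x' = rng G g'"
    "ract X x g = ract X x' g'"
  shows "x = x' \<and> g = g'"
proof -
  have "src G g = src G g'" using assms ra_s by metis
  then have gg: "g = g'" using Ws assms inj_onD by metis
  then have "anc_s X x = anc_s X x'" using assms by simp
  then have "x = x'" using V1i assms inj_onD by metis
  then show ?thesis using gg by simp
qed

lemma bs_uniq:
  assumes "x1 \<in> V1" "x1' \<in> V1" "same_orbit G X x1 x2" "same_orbit G X x1' x2'"
    "bra G X x1 x2 = bra G X x1' x2'"
  shows "x1 = x1' \<and> x2 = x2'"
proof -
  have "anc_s X x1 = anc_s X x1'" using so_bra assms by metis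
  then have e: "x1 = x1'" using V1i assms inj_onD by metis
  then have "x2 = x2'" using so_bra assms by metis
  then show ?thesis using e by simp
qed

lemma hx_uniq:
  assumes "h \<in> Z" "h' \<in> Z" "src H h = anc_r X x" "src H h' = anc_r X x'"
    "lact X h x = lact X h' x'"
  shows "h = h' \<and> x = x'"
proof -
  have "rng H h = rng H h'" using assms la_r by metis
  then have e: "h = h'" using Zr assms inj_onD by metis
  then have "x = x'" using la_inv assms by metis
  then show ?thesis using e by simp
qed

lemma val_r': "\<forall>x\<in>V1. \<forall>g\<in>W. anc_s X x = rng G g \<longrightarrow> conv_r G X xi gamma (ract X x g) = xi x * gamma g"
  using val_r by blast
lemma val_b': "\<forall>x1\<in>V1. \<forall>x2\<in>V2. same_orbit G X x1 x2 \<longrightarrow> inner_prod G X xi eta (bra G X x1 x2) = cnj (xi x1) * eta x2"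
  using val_b by blast
lemma val_l': "\<forall>h\<in>Z. \<forall>x\<in>V1. src H h = anc_r X x \<longrightarrow> conv_l H X zeta xi (lact X h x) = zeta h * xi x"
  using val_l by blast

lemma uniq_r: "\<forall>y\<in>xg_set G X V1 W. \<exists>!(x, g). x \<in> V1 \<and> g \<in> W \<and> anc_s X x = rng G g \<and> ract X x g = y"
proof
  fix y assume "y \<in> xg_set G X V1 W"
  then obtain x g where xg: "x \<in> V1" "g \<in> W" "anc_s X x = rng G g" "y = ract X x g"
    unfolding xg_set_def by blast
  show "\<exists>!(x, g). x \<in> V1 \<and> g \<in> W \<and> anc_s X x = rng G g \<and> ract X x g = y"
  proof (rule ex1I[of _ "(x, g)"])
    show "case (x, g) of (x, g) \<Rightarrow> x \<in> V1 \<and> g \<in> W \<and> anc_s X x = rng G g \<and> ract X x g = y"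
      using xg by simp
    fix p assume p: "case p of (x, g) \<Rightarrow> x \<in> V1 \<and> g \<in> W \<and> anc_s X x = rng G g \<and> ract X x g = y"
    obtain x' g' where pe: "p = (x', g')" by (cases p)
    show "p = (x, g)" using p pe xg xg_uniq[of x' x g' g] by simp
  qed
qed

lemma uniq_b: "\<forall>g\<in>bra_set G X V1 V2. \<exists>!(x1, x2). x1 \<in> V1 \<and> x2 \<in> V2 \<and> same_orbit G X x1 x2 \<and> g = bra G X x1 x2"
proof
  fix g assume "g \<in> bra_set G X V1 V2"
  then obtain x1 x2 where xx: "x1 \<in> V1" "x2 \<in> V2" "same_orbit G X x1 x2" "g = bra G X x1 x2"
    unfolding bra_set_def by blast
  show "\<exists>!(x1, x2). x1 \<in> V1 \<and> x2 \<in> V2 \<and> same_orbit G X x1 x2 \<and> g = bra G X x1 x2"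
  proof (rule ex1I[of _ "(x1, x2)"])
    show "case (x1, x2) of (x1, x2) \<Rightarrow> x1 \<in> V1 \<and> x2 \<in> V2 \<and> same_orbit G X x1 x2 \<and> g = bra G X x1 x2"
      using xx by simp
    fix p assume p: "case p of (x1, x2) \<Rightarrow> x1 \<in> V1 \<and> x2 \<in> V2 \<and> same_orbit G X x1 x2 \<and> g = bra G X x1 x2"
    obtain a b where pe: "p = (a, b)" by (cases p)
    show "p = (x1, x2)" using p pe xx bs_uniq[of a x1 b x2] by simp
  qed
qed

lemma uniq_l: "\<forall>y\<in>hx_set H X Z V1. \<exists>!(h, x). h \<in> Z \<and> x \<in> V1 \<and> src H h = anc_r X x \<and> y = lact X h x"
proof
  fix y assume "y \<in> hx_set H X Z V1"
  then obtain h x where hx: "h \<in> Z" "x \<in> V1" "src H h = anc_r X x" "y = lact X h x"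
    unfolding hx_set_def by blast
  show "\<exists>!(h, x). h \<in> Z \<and> x \<in> V1 \<and> src H h = anc_r X x \<and> y = lact X h x"
  proof (rule ex1I[of _ "(h, x)"])
    show "case (h, x) of (h, x) \<Rightarrow> h \<in> Z \<and> x \<in> V1 \<and> src H h = anc_r X x \<and> y = lact X h x"
      using hx by simp
    fix p assume p: "case p of (h, x) \<Rightarrow> h \<in> Z \<and> x \<in> V1 \<and> src H h = anc_r X x \<and> y = lact X h x"
    obtain a b where pe: "p = (a, b)" by (cases p)
    show "p = (h, x)" using p pe hx hx_uniq[of a h b x] by simp
  qed
qed

lemma xs_r: "xslice G X (xg_set G X V1 W)"
  unfolding xslice_def
proof (intro conjI ballI impI)
  show "open (xg_set G X V1 W)" by (rule xg_open)
  show "inj_on (anc_s X) (xg_set G X V1 W)"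
  proof (rule inj_onI)
    fix y y' assume "y \<in> xg_set G X V1 W" "y' \<in> xg_set G X V1 W" and e: "anc_s X y = anc_s X y'"
    then obtain x g x' g' where r: "x \<in> V1" "g \<in> W" "anc_s X x = rng G g" "y = ract X x g"
       "x' \<in> V1" "g' \<in> W" "anc_s X x' = rng G g'" "y' = ract X x' g'"
      unfolding xg_set_def by blast
    have "src G g = src G g'" using e r ra_s by metis
    then have gg: "g = g'" using Ws r inj_onD by metis
    then have "x = x'" using V1i r inj_onD by metis
    then show "y = y'" using gg r by simp
  qed
  fix y y' assume "y \<in> xg_set G X V1 W" "y' \<in> xg_set G X V1 W" and so: "same_orbit G X y y'"
  then obtain x g x' g' where r: "x \<in> V1" "g \<in> W" "anc_s X x = rng G g" "y = ract X x g"
     "x' \<in> V1" "g' \<in> W" "anc_s X x' = rng G g'" "y' = ract X x' g'"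
    unfolding xg_set_def by blast
  have "same_orbit G X x y" "same_orbit G X y' x'" using r so_intro so_sym by auto
  then have "same_orbit G X x x'" using so so_trans by blast
  then have xx: "x = x'" using V1so r by blast
  then have "g = g'" using Wr r inj_onD by metis
  then show "y = y'" using xx r by simp
qed

lemma xs_l: "xslice G X (hx_set H X Z V1)"
  unfolding xslice_def
proof (intro conjI ballI impI)
  show "open (hx_set H X Z V1)" by (rule hx_open)
  show "inj_on (anc_s X) (hx_set H X Z V1)"
  proof (rule inj_onI)
    fix y y' assume "y \<in> hx_set H X Z V1" "y' \<in> hx_set H X Z V1" and e: "anc_s X y = anc_s X y'"
    then obtain h x h' x' where r: "h \<in> Z" "x \<in> V1" "src H h = anc_r X x" "y = lact X h x"
       "h' \<in> Z" "x' \<in> V1" "src H h' = anc_r X x'" "y' = lact X h' x'"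
      unfolding hx_set_def by blast
    have "anc_s X x = anc_s X x'" using e r la_s by metis
    then have xx: "x = x'" using V1i r inj_onD by metis
    then have "h = h'" using Zs r inj_onD by metis
    then show "y = y'" using xx r by simp
  qed
  fix y y' assume "y \<in> hx_set H X Z V1" "y' \<in> hx_set H X Z V1" and so: "same_orbit G X y y'"
  then obtain h x h' x' where r: "h \<in> Z" "x \<in> V1" "src H h = anc_r X x" "y = lact X h x"
     "h' \<in> Z" "x' \<in> V1" "src H h' = anc_r X x'" "y' = lact X h' x'"
    unfolding hx_set_def by blast
  obtain k where k: "anc_s X y = rng G k" "y' = ract X y k" using so unfolding same_orbit_def by blast
  have ks: "anc_s X x = rng G k" using k r la_s by metis
  have "rng H h' = anc_r X y'" using r la_r by metis
  also have "\<dots> = anc_r X y" using k ra_r by metis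
  also have "\<dots> = rng H h" using r la_r by metis
  finally have hh: "h = h'" using Zr r inj_onD by metis
  have "y' = ract X (lact X h x) k" using k r by simp
  also have "\<dots> = lact X h (ract X x k)" using comm[OF r(3) ks] .
  finally have y': "y' = lact X h (ract X x k)" .
  have "lact X (ginv H h) y' = x'" using la_inv[of h' x'] r hh by simp
  moreover have "lact X (ginv H h) y' = ract X x k"
    using y' la_inv[of h "ract X x k"] ra_r[OF ks] r(3) by simp
  ultimately have "x' = ract X x k" by simp
  then have "same_orbit G X x x'" using so_intro ks by simp
  then have xx: "x = x'" using V1so r by blast
  then show "y = y'" using hh r by simp
qed

lemma gs_b: "gslice G (bra_set G X V1 V2)"
  unfolding gslice_def
proof (intro conjI)
  show "open (bra_set G X V1 V2)" by (rule bs_open)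
  show "inj_on (src G) (bra_set G X V1 V2)"
  proof (rule inj_onI)
    fix g g' assume "g \<in> bra_set G X V1 V2" "g' \<in> bra_set G X V1 V2" and e: "src G g = src G g'"
    then obtain x1 x2 x1' x2' where r: "x1 \<in> V1" "x2 \<in> V2" "same_orbit G X x1 x2" "g = bra G X x1 x2"
       "x1' \<in> V1" "x2' \<in> V2" "same_orbit G X x1' x2'" "g' = bra G X x1' x2'"
      unfolding bra_set_def by blast
    have "anc_s X x2 = src G g" using so_bra[OF r(3)] ra_s r by metis
    moreover have "anc_s X x2' = src G g'" using so_bra[OF r(7)] ra_s r by metis
    ultimately have x2: "x2 = x2'" using e V2i r inj_onD by metis
    have "same_orbit G X x2 x1'" using so_sym[OF r(7)] x2 by simp
    then have "same_orbit G X x1 x1'" using so_trans[OF r(3)] by blast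
    then have "x1 = x1'" using V1so r by blast
    then show "g = g'" using x2 r by simp
  qed
  show "inj_on (rng G) (bra_set G X V1 V2)"
  proof (rule inj_onI)
    fix g g' assume "g \<in> bra_set G X V1 V2" "g' \<in> bra_set G X V1 V2" and e: "rng G g = rng G g'"
    then obtain x1 x2 x1' x2' where r: "x1 \<in> V1" "x2 \<in> V2" "same_orbit G X x1 x2" "g = bra G X x1 x2"
       "x1' \<in> V1" "x2' \<in> V2" "same_orbit G X x1' x2'" "g' = bra G X x1' x2'"
      unfolding bra_set_def by blast
    have "anc_s X x1 = anc_s X x1'" using so_bra r e by metis
    then have x1: "x1 = x1'" using V1i r inj_onD by metis
    have "same_orbit G X x2 x1'" using so_sym[OF r(3)] x1 by simp
    then have "same_orbit G X x2 x2'" using so_trans r(7) by blast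
    then have "x2 = x2'" using V2so r by blast
    then show "g = g'" using x1 r by simp
  qed
qed

end

theorem lemma7p4:
  fixes H :: "('h::topological_space, 'b::t2_space) groupoid"
    and G :: "('g::topological_space, 'a::t2_space) groupoid"
    and X :: "('x::topological_space, 'h, 'b, 'g, 'a) corresp"
    and V1 V2 :: "'x set" and W :: "'g set" and Z :: "'h set"
    and xi eta :: "'x \<Rightarrow> complex" and gamma :: "'g \<Rightarrow> complex" and zeta :: "'h \<Rightarrow> complex"
  assumes corr: "groupoid_corresp H G X"
    and V1: "xslice G X V1" and V2: "xslice G X V2"
    and W: "gslice G W" and Z: "gslice H Z"
    and xi: "cc_on V1 xi" and eta: "cc_on V2 eta"
    and gamma: "cc_on W gamma" and zeta: "cc_on Z zeta"
  shows "xslice G X (xg_set G X V1 W) \<and> gslice G (bra_set G X V1 V2) \<and> xslice G X (hx_set H X Z V1)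
    \<and> (\<forall>y\<in>xg_set G X V1 W. \<exists>!(x, g). x \<in> V1 \<and> g \<in> W \<and> anc_s X x = rng G g \<and> ract X x g = y)
    \<and> cc_on (xg_set G X V1 W) (conv_r G X xi gamma)
    \<and> (\<forall>x\<in>V1. \<forall>g\<in>W. anc_s X x = rng G g \<longrightarrow> conv_r G X xi gamma (ract X x g) = xi x * gamma g)
    \<and> (\<forall>g\<in>bra_set G X V1 V2. \<exists>!(x1, x2). x1 \<in> V1 \<and> x2 \<in> V2 \<and> same_orbit G X x1 x2 \<and> g = bra G X x1 x2)
    \<and> cc_on (bra_set G X V1 V2) (inner_prod G X xi eta)
    \<and> (\<forall>x1\<in>V1. \<forall>x2\<in>V2. same_orbit G X x1 x2 \<longrightarrow> inner_prod G X xi eta (bra G X x1 x2) = cnj (xi x1) * eta x2)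
    \<and> (\<forall>y\<in>hx_set H X Z V1. \<exists>!(h, x). h \<in> Z \<and> x \<in> V1 \<and> src H h = anc_r X x \<and> y = lact X h x)
    \<and> cc_on (hx_set H X Z V1) (conv_l H X zeta xi)
    \<and> (\<forall>h\<in>Z. \<forall>x\<in>V1. src H h = anc_r X x \<longrightarrow> conv_l H X zeta xi (lact X h x) = zeta h * xi x)"
proof -
  interpret L: lctx H G X V1 V2 W Z xi eta gamma zeta
    by (intro lctx.intro lctx_axioms.intro gcorr.intro assms)
  show ?thesis
    by (intro conjI L.xs_r L.gs_b L.xs_l L.uniq_r L.cc_r L.val_r' L.uniq_b L.cc_b L.val_b' L.uniq_l L.cc_l L.val_l')
qed

end
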